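(* For every integer $k\ge1$, the maps $F:\mathbb{F}_q^k\to\mathbb{F}_q^k$ and $G:\mathbb{F}_q^k\to\mathbb{F}_q^k$ are inverse to one another; in particular both are bijections of $\mathbb{F}_q^k$.
   Context: Let $q>2$ be a prime power and $\mathbb{F}_q$ the field with $q$ elements; for $c\in\mathbb{F}_q$, $c^{q-2}$ denotes the field element (so $0^{q-2}=0$ and $c^{q-2}=c^{-1}$ for $c\neq0$). The map $F:\mathbb{F}_q^k\to\mathbb{F}_q^k$ sends $(a_1,\dots,a_k)$ to $(b_1,\dots,b_k)$ where $b_i:=c_{i,i}$, and for each $1\le i\le k$ the elements $c_{i,j}$ ($0\le j\le i$) are defined by $c_{i,0}:=0$ and $c_{i,j}:=c_{i,j-1}^{q-2}+a_{i-j+1}$. For $2\le\ell\le k$ let $\Phi_\ell:\mathbb{F}_q^\ell\to\mathbb{F}_q^{\ell-1}$ send $(e_1,\dots,e_\ell)$ to $((e_2-e_1)^{q-2},(e_3-e_1)^{q-2},\dots,(e_\ell-e_1)^{q-2})$. The map $G:\mathbb{F}_q^k\to\mathbb{F}_q^k$ sends $(b_1,\dots,b_k)$ to $(a_1,\dots,a_k)$ where $a_i$ is the first entry of $\Phi_{k-i+2}\circ\Phi_{k-i+3}\circ\cdots\circ\Phi_k(b_1,\dots,b_k)\in\mathbb{F}_q^{k-i+1}$ (for $i=1$ this composite is the identity, so $a_1=b_1$). *)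

theory Defs
  imports Main "HOL-Library.Cardinality"
begin

text \<open>The finite field F_q is modelled by a type 'a of class field and finite; q = CARD('a).
 Any finite field has prime-power order, so "q a prime power" is automatic.
 Elements of F_q^k are lists of length k; the paper's 1-indexed a_i is the list entry a ! (i - 1).\<close>

definition finv :: "'a::{field,finite} \<Rightarrow> 'a" where
  "finv c = c ^ (CARD('a) - 2)"

fun cF :: "'a::{field,finite} list \<Rightarrow> nat \<Rightarrow> nat \<Rightarrow> 'a" where
  "cF a i 0 = 0"
| "cF a i (Suc j) = finv (cF a i j) + a ! (i - Suc j)"

definition mapF :: "'a::{field,finite} list \<Rightarrow> 'a list" where
  "mapF a = map (\<lambda>i. cF a i i) [1..<length a + 1]"

fun Phi :: "'a::{field,finite} list \<Rightarrow> 'a list" where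
  "Phi [] = []"
| "Phi (e # es) = map (\<lambda>x. finv (x - e)) es"

text \<open>a_i = first entry of Phi_{k-i+2} o ... o Phi_k (b), i.e. i-1 applications of Phi.\<close>
definition mapG :: "'a::{field,finite} list \<Rightarrow> 'a list" where
  "mapG b = map (\<lambda>i. hd ((Phi ^^ (i - 1)) b)) [1..<length b + 1]"

end

theory Submission
  imports Defs
begin

lemma fermat_ff:
  fixes x :: "'a::{field,finite}"
  assumes "x \<noteq> 0"
  shows "x ^ (CARD('a) - 1) = 1"
proof -
  let ?S = "UNIV - {0::'a}"
  have bij: "bij_betw (\<lambda>y. x * y) ?S ?S"
    unfolding bij_betw_def inj_on_def
  proof (intro conjI ballI impI)
    show "(\<lambda>y. x * y) ` ?S = ?S"
    proof
      show "(\<lambda>y. x * y) ` ?S \<subseteq> ?S" using assms by auto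
      show "?S \<subseteq> (\<lambda>y. x * y) ` ?S"
      proof
        fix z assume "z \<in> ?S"
        then have "z = x * (inverse x * z)" "inverse x * z \<in> ?S" using assms by auto
        then show "z \<in> (\<lambda>y. x * y) ` ?S" by blast
      qed
    qed
  qed (use assms in auto)
  have 1: "prod (\<lambda>y. x * y) ?S = prod id ?S"
    using prod.reindex_bij_betw[OF bij, of id] by simp
  have 2: "prod (\<lambda>y. x * y) ?S = x ^ card ?S * prod id ?S"
    by (simp add: prod.distrib)
  have 3: "prod id ?S \<noteq> 0" by simp
  have 4: "card ?S = CARD('a) - 1" by (simp add: card_Diff_singleton)
  have "x ^ card ?S * prod id ?S = 1 * prod id ?S" using 1 2 by simp
  then have "x ^ card ?S = 1" using 3 by (rule mult_right_cancel[THEN iffD1, rotated])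
  then show ?thesis using 4 by simp
qed

lemma finv_eq: "CARD('a::{field,finite}) > 2 \<Longrightarrow> finv (x::'a) = inverse x"
proof (cases "x = 0")
  case True
  assume "CARD('a) > 2"
  then show ?thesis using True by (simp add: finv_def)
next
  case False
  assume c: "CARD('a) > 2"
  have e: "CARD('a) - 1 = Suc (CARD('a) - 2)" using c by arith
  have "finv x * x = x ^ Suc (CARD('a) - 2)"
    unfolding finv_def by (rule power_Suc2[symmetric])
  also have "\<dots> = x ^ (CARD('a) - 1)" using e by simp
  also have "\<dots> = 1" using fermat_ff[OF False] .
  finally show ?thesis using False by (simp add: field_simps)
qed
lemma cF_Cons: "j \<le> i \<Longrightarrow> cF (x#xs) (Suc i) j = cF xs i j"
  by (induction j) (auto simp: Suc_diff_Suc)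

lemma upt1: "[1..<n + 1] = map Suc [0..<n]"
  by (metis map_Suc_upt One_nat_def Suc_eq_plus1)

lemma upt0_Suc: "[0..<Suc n] = 0 # map Suc [0..<n]"
  by (simp add: map_Suc_upt upt_conv_Cons del: upt_Suc)

lemma mapF_alt: "mapF a = map (\<lambda>i. cF a (Suc i) (Suc i)) [0..<length a]"
  unfolding mapF_def upt1 by simp

lemma mapG_alt: "mapG a = map (\<lambda>i. hd ((Phi ^^ i) a)) [0..<length a]"
  unfolding mapG_def upt1 by simp

lemma mapF_Nil: "mapF [] = []" by (simp add: mapF_def)

lemma length_mapF[simp]: "length (mapF a) = length a" by (simp add: mapF_alt)
lemma length_mapG[simp]: "length (mapG a) = length a" by (simp add: mapG_alt)
lemma length_Phi[simp]: "length (Phi a) = length a - 1" by (cases a) auto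

lemma mapG_Nil: "mapG [] = []" by (simp add: mapG_def)

lemma mapG_Cons: "mapG (e#es) = e # mapG (Phi (e#es))"
proof -
  have "mapG (e#es) = map (\<lambda>i. hd ((Phi ^^ i) (e#es))) (0 # map Suc [0..<length es])"
    unfolding mapG_alt by (simp only: length_Cons upt0_Suc)
  also have "\<dots> = e # map (\<lambda>i. hd ((Phi ^^ i) (Phi (e#es)))) [0..<length es]"
    by (simp add: funpow_Suc_right del: Phi.simps upt_Suc funpow.simps)
  finally show ?thesis by (simp add: mapG_alt del: Phi.simps upt_Suc)
qed

context
  assumes c: "CARD('a::{field,finite}) > 2"
begin

lemma mapF_Cons: "mapF (x#xs) = x # map (\<lambda>y. x + inverse y) (mapF (xs::'a list))"
proof -
  have "mapF (x#xs) = map (\<lambda>i. cF (x#xs) (Suc i) (Suc i)) (0 # map Suc [0..<length xs])"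
    unfolding mapF_alt by (simp only: length_Cons upt0_Suc)
  also have "\<dots> = cF (x#xs) 1 1 # map (\<lambda>i. cF (x#xs) (Suc (Suc i)) (Suc (Suc i))) [0..<length xs]"
    by (simp del: upt_Suc cF.simps)
  also have "map (\<lambda>i. cF (x#xs) (Suc (Suc i)) (Suc (Suc i))) [0..<length xs]
      = map (\<lambda>i. x + inverse (cF xs (Suc i) (Suc i))) [0..<length xs]"
    by (simp add: cF_Cons add.commute finv_eq[OF c] del: upt_Suc)
  also have "cF (x#xs) 1 1 = x" by (simp add: finv_eq[OF c])
  finally show ?thesis by (simp add: mapF_alt del: upt_Suc)
qed

lemma GF: "mapG (mapF (a::'a list)) = a"
proof (induction a)
  case Nil then show ?case by (simp add: mapF_Nil mapG_Nil)
next
  case (Cons x xs)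
  have "Phi (mapF (x#xs)) = mapF xs"
    by (simp add: mapF_Cons finv_eq[OF c] comp_def)
  then show ?case using Cons by (simp add: mapG_Cons mapF_Cons del: Phi.simps)
qed

lemma FG: "mapF (mapG (b::'a list)) = b"
proof (induction "length b" arbitrary: b)
  case 0 then show ?case by (simp add: mapF_Nil mapG_Nil)
next
  case (Suc n)
  then obtain e es where b: "b = e # es" by (cases b) auto
  have P: "Phi b = map (\<lambda>x. inverse (x - e)) es" using b by (simp add: finv_eq[OF c])
  have "mapF (mapG (Phi b)) = Phi b" using Suc b by simp
  then have "mapF (mapG b) = e # map (\<lambda>y. e + inverse y) (Phi b)"
    using b by (simp add: mapG_Cons mapF_Cons del: Phi.simps)
  also have "\<dots> = b" unfolding P b by (simp add: comp_def map_idI finv_eq[OF c])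
  finally show ?case .
qed

end

theorem theorem3p1:
  fixes k :: nat
  assumes "CARD('a::{field,finite}) > 2"
    and "k \<ge> 1"
  shows "(\<forall>a::'a list. length a = k \<longrightarrow> length (mapF a) = k \<and> mapG (mapF a) = a)
       \<and> (\<forall>b::'a list. length b = k \<longrightarrow> length (mapG b) = k \<and> mapF (mapG b) = b)
       \<and> bij_betw (mapF :: 'a list \<Rightarrow> 'a list) {x. length x = k} {x. length x = k}
       \<and> bij_betw (mapG :: 'a list \<Rightarrow> 'a list) {x. length x = k} {x. length x = k}"
proof -
  note GF = GF[OF assms(1)] and FG = FG[OF assms(1)]
  have "bij_betw (mapF :: 'a list \<Rightarrow> 'a list) {x. length x = k} {x. length x = k}"
    by (rule bij_betw_byWitness[where f'=mapG]) (auto simp: GF FG)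
  moreover have "bij_betw (mapG :: 'a list \<Rightarrow> 'a list) {x. length x = k} {x. length x = k}"
    by (rule bij_betw_byWitness[where f'=mapF]) (auto simp: GF FG)
  ultimately show ?thesis by (simp add: GF FG)
qed

end
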